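(* Let $P \subseteq \mathbb{R}^7$ be an associative $3$-plane. Then the orthogonal direct sum $\Theta(P) = \Lambda^2(P) \oplus \Psi(P)$ is a Lie subalgebra of $\Lambda^2(\mathbb{R}^7) = \mathfrak{so}(7)$ isomorphic to $\mathfrak{so}(4)$.
   Context: Equip $\mathbb{R}^7$ with its standard inner product, orientation and basis. Let $\varphi = e_{123} - e_{167} - e_{527} - e_{563} - e_{415} - e_{426} - e_{437}$ ($e_{ijk} = e_i\wedge e_j\wedge e_k$), $\psi = \star\varphi = e_{4567} - e_{4523} - e_{4163} - e_{4127} - e_{2637} - e_{1537} - e_{1526}$, and define $\times$ by $\langle u \times v, w \rangle = \varphi(u,v,w)$. A $3$-dimensional subspace is associative if closed under $\times$. For $u,v$: $u\wedge v$ is the 2-form $(a,b)\mapsto \langle u,a\rangle\langle v,b\rangle - \langle u,b\rangle\langle v,a\rangle$, and $\Psi_{uv}$ is the 2-form $(a,b)\mapsto\psi(u,v,a,b)$. $\Lambda^2(P) = \mathrm{Span}\{u\wedge v: u,v\in P\}$, $\Psi(P) = \mathrm{Span}\{\Psi_{uv} : u,v\in P\}$. Skew bilinear forms are identified with skew-adjoint operators via $X(a,b) = \langle X(a),b\rangle$, the bracket is the commutator, and the inner product on $\Lambda^2$ is $\langle X,Y\rangle = \sum_{i,j} X(e_i,e_j)Y(e_i,e_j)$. *)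

theory Defs
  imports "HOL-Analysis.Analysis"
begin

text \<open>Vectors of R^7 are elements of real^7; coordinates are x $ 1, ..., x $ 7
  (the indices 1,...,7 of the numeral type 7 are pairwise distinct).
  The standard basis vector e_i is axis i 1.\<close>

definition e_i :: "7 \<Rightarrow> real^7" where
  "e_i i = axis i 1"

text \<open>e_{ijk} = e_i ^ e_j ^ e_k evaluated on (u,v,w): the 3x3 determinant.\<close>
definition e3 :: "7 \<Rightarrow> 7 \<Rightarrow> 7 \<Rightarrow> real^7 \<Rightarrow> real^7 \<Rightarrow> real^7 \<Rightarrow> real" where
  "e3 i j k u v w =
     u$i * (v$j * w$k - v$k * w$j)
   - u$j * (v$i * w$k - v$k * w$i)
   + u$k * (v$i * w$j - v$j * w$i)"

text \<open>e_{ijkl} evaluated on (a,b,c,d): the 4x4 determinant (Laplace expansion).\<close>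
definition e4 :: "7 \<Rightarrow> 7 \<Rightarrow> 7 \<Rightarrow> 7 \<Rightarrow> real^7 \<Rightarrow> real^7 \<Rightarrow> real^7 \<Rightarrow> real^7 \<Rightarrow> real" where
  "e4 i j k l a b c d =
     a$i * e3 j k l b c d - a$j * e3 i k l b c d
   + a$k * e3 i j l b c d - a$l * e3 i j k b c d"

definition phi :: "real^7 \<Rightarrow> real^7 \<Rightarrow> real^7 \<Rightarrow> real" where
  "phi u v w = e3 1 2 3 u v w - e3 1 6 7 u v w - e3 5 2 7 u v w - e3 5 6 3 u v w
             - e3 4 1 5 u v w - e3 4 2 6 u v w - e3 4 3 7 u v w"

definition psi :: "real^7 \<Rightarrow> real^7 \<Rightarrow> real^7 \<Rightarrow> real^7 \<Rightarrow> real" where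
  "psi a b c d = e4 4 5 6 7 a b c d - e4 4 5 2 3 a b c d - e4 4 1 6 3 a b c d
             - e4 4 1 2 7 a b c d - e4 2 6 3 7 a b c d - e4 1 5 3 7 a b c d
             - e4 1 5 2 6 a b c d"

definition cross7 :: "real^7 \<Rightarrow> real^7 \<Rightarrow> real^7" where
  "cross7 u v = (\<chi> i. phi u v (e_i i))"

definition associative :: "(real^7) set \<Rightarrow> bool" where
  "associative P \<longleftrightarrow> subspace P \<and> dim P = 3 \<and> (\<forall>u\<in>P. \<forall>v\<in>P. cross7 u v \<in> P)"

text \<open>2-forms as bilinear maps; identified with skew-adjoint operators (matrices)
  via X(a,b) = <X a, b>, i.e. the matrix entry (i,j) is X(e_j,e_i).\<close>
definition op_of :: "(real^7 \<Rightarrow> real^7 \<Rightarrow> real) \<Rightarrow> real^7^7" where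
  "op_of B = (\<chi> i j. B (e_i j) (e_i i))"

definition form_of :: "real^7^7 \<Rightarrow> real^7 \<Rightarrow> real^7 \<Rightarrow> real" where
  "form_of X a b = (X *v a) \<bullet> b"

definition wedge2 :: "real^7 \<Rightarrow> real^7 \<Rightarrow> real^7 \<Rightarrow> real^7 \<Rightarrow> real" where
  "wedge2 u v a b = (u \<bullet> a) * (v \<bullet> b) - (u \<bullet> b) * (v \<bullet> a)"

definition Psi2 :: "real^7 \<Rightarrow> real^7 \<Rightarrow> real^7 \<Rightarrow> real^7 \<Rightarrow> real" where
  "Psi2 u v a b = psi u v a b"

definition Lambda2 :: "(real^7) set \<Rightarrow> (real^7^7) set" where
  "Lambda2 P = span {op_of (wedge2 u v) | u v. u \<in> P \<and> v \<in> P}"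

definition PsiSpan :: "(real^7) set \<Rightarrow> (real^7^7) set" where
  "PsiSpan P = span {op_of (Psi2 u v) | u v. u \<in> P \<and> v \<in> P}"

definition Theta :: "(real^7) set \<Rightarrow> (real^7^7) set" where
  "Theta P = {X + Y | X Y. X \<in> Lambda2 P \<and> Y \<in> PsiSpan P}"

definition form_inner :: "real^7^7 \<Rightarrow> real^7^7 \<Rightarrow> real" where
  "form_inner X Y = (\<Sum>i\<in>UNIV. \<Sum>j\<in>UNIV. form_of X (e_i i) (e_i j) * form_of Y (e_i i) (e_i j))"

definition lie_bracket :: "'a::comm_ring_1^'n^'n \<Rightarrow> 'a^'n^'n \<Rightarrow> 'a^'n^'n" where
  "lie_bracket X Y = X ** Y - Y ** X"

definition so :: "(real^'n^'n) set" where
  "so = {M. transpose M = - M}"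

end

theory Submission
  imports Defs
begin

lemma exhaust_7:
  fixes x :: 7
  shows "x = 1 \<or> x = 2 \<or> x = 3 \<or> x = 4 \<or> x = 5 \<or> x = 6 \<or> x = 7"
proof (induct x)
  case (of_int z)
  then have "z = 0 \<or> z = 1 \<or> z = 2 \<or> z = 3 \<or> z = 4 \<or> z = 5 \<or> z = 6" by fastforce
  then show ?case by auto
qed
lemma UNIV_7: "UNIV = {1, 2, 3, 4, 5, 6, 7::7}"
  using exhaust_7 by auto
lemma sum_7: "sum f (UNIV::7 set) = f 1 + f 2 + f 3 + f 4 + f 5 + f 6 + f 7"
  unfolding UNIV_7 by (simp add: ac_simps)
lemma forall_7: "(\<forall>i::7. P i) \<longleftrightarrow> P 1 \<and> P 2 \<and> P 3 \<and> P 4 \<and> P 5 \<and> P 6 \<and> P 7"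
  by (metis exhaust_7)

lemma cross_c:
 "cross7 u v $ 1 = (u$2 * v$3 - u$3 * v$2) + (u$4 * v$5 - u$5 * v$4) - (u$6 * v$7 - u$7 * v$6)"
 "cross7 u v $ 2 = - (u$1 * v$3 - u$3 * v$1) + (u$4 * v$6 - u$6 * v$4) + (u$5 * v$7 - u$7 * v$5)"
 "cross7 u v $ 3 = (u$1 * v$2 - u$2 * v$1) + (u$4 * v$7 - u$7 * v$4) - (u$5 * v$6 - u$6 * v$5)"
 "cross7 u v $ 4 = - (u$1 * v$5 - u$5 * v$1) - (u$2 * v$6 - u$6 * v$2) - (u$3 * v$7 - u$7 * v$3)"
 "cross7 u v $ 5 = (u$1 * v$4 - u$4 * v$1) - (u$2 * v$7 - u$7 * v$2) + (u$3 * v$6 - u$6 * v$3)"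
 "cross7 u v $ 6 = (u$1 * v$7 - u$7 * v$1) + (u$2 * v$4 - u$4 * v$2) - (u$3 * v$5 - u$5 * v$3)"
 "cross7 u v $ 7 = - (u$1 * v$6 - u$6 * v$1) + (u$2 * v$5 - u$5 * v$2) + (u$3 * v$4 - u$4 * v$3)"
  by (simp_all add: cross7_def phi_def e3_def e_i_def axis_def algebra_simps)

lemma inner7: "(x::real^7) \<bullet> y = x$1*y$1 + x$2*y$2 + x$3*y$3 + x$4*y$4 + x$5*y$5 + x$6*y$6 + x$7*y$7"
  by (simp add: inner_vec_def sum_7)

lemma phi_cross: "phi u v w = cross7 u v \<bullet> w"
  by (simp add: inner7 cross_c phi_def e3_def algebra_simps)

lemma cross_cross: "cross7 x (cross7 x y) = (x \<bullet> y) *\<^sub>R x - (x \<bullet> x) *\<^sub>R y"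
  by (simp add: vec_eq_iff forall_7 inner7 cross_c algebra_simps)

lemma cross_M: "cross7 x (cross7 y z) + cross7 (cross7 x y) z = (2 * (x \<bullet> z)) *\<^sub>R y - (x \<bullet> y) *\<^sub>R z - (y \<bullet> z) *\<^sub>R x"
  by (simp add: vec_eq_iff forall_7 inner7 cross_c algebra_simps)

lemma cross_norm: "cross7 x y \<bullet> cross7 x z = (x \<bullet> x) * (y \<bullet> z) - (x \<bullet> y) * (x \<bullet> z)"
  by (simp add: inner7 cross_c algebra_simps)

lemma psi_cross: "psi a b c d = cross7 a (cross7 b c) \<bullet> d + (a \<bullet> b) * (c \<bullet> d) - (a \<bullet> c) * (b \<bullet> d)"
  by (simp add: inner7 cross_c psi_def e4_def e3_def algebra_simps)

lemma cross_anti: "cross7 x y = - cross7 y x"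
  by (simp add: vec_eq_iff forall_7 cross_c algebra_simps)
lemma cross_self[simp]: "cross7 x x = 0"
  by (simp add: vec_eq_iff forall_7 cross_c algebra_simps)
lemma cross_cyc: "cross7 x y \<bullet> z = cross7 y z \<bullet> x"
  by (simp add: inner7 cross_c algebra_simps)
lemma cross_orth1[simp]: "cross7 x y \<bullet> x = 0"
  by (simp add: inner7 cross_c algebra_simps)
lemma cross_orth2[simp]: "cross7 x y \<bullet> y = 0"
  by (simp add: inner7 cross_c algebra_simps)
lemma cross_add1: "cross7 (x + y) z = cross7 x z + cross7 y z"
  by (simp add: vec_eq_iff forall_7 cross_c algebra_simps)
lemma cross_add2: "cross7 z (x + y) = cross7 z x + cross7 z y"
  by (simp add: vec_eq_iff forall_7 cross_c algebra_simps)
lemma cross_scale1: "cross7 (r *\<^sub>R x) z = r *\<^sub>R cross7 x z"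
  by (simp add: vec_eq_iff forall_7 cross_c algebra_simps)
lemma cross_scale2: "cross7 z (r *\<^sub>R x) = r *\<^sub>R cross7 z x"
  by (simp add: vec_eq_iff forall_7 cross_c algebra_simps)
lemma bilinear_cross: "bilinear cross7"
  unfolding bilinear_def
  by (auto intro!: linearI simp: cross_add1 cross_add2 cross_scale1 cross_scale2)

lemma psi_add1: "psi (x + y) b c d = psi x b c d + psi y b c d"
  by (simp add: psi_def e4_def e3_def algebra_simps)
lemma psi_scale1: "psi (r *\<^sub>R x) b c d = r * psi x b c d"
  by (simp add: psi_def e4_def e3_def algebra_simps)
lemma psi_add2: "psi a (x + y) c d = psi a x c d + psi a y c d"
  by (simp add: psi_def e4_def e3_def algebra_simps)
lemma psi_scale2: "psi a (r *\<^sub>R x) c d = r * psi a x c d"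
  by (simp add: psi_def e4_def e3_def algebra_simps)
lemma psi_add3: "psi a b (x + y) d = psi a b x d + psi a b y d"
  by (simp add: psi_def e4_def e3_def algebra_simps)
lemma psi_scale3: "psi a b (r *\<^sub>R x) d = r * psi a b x d"
  by (simp add: psi_def e4_def e3_def algebra_simps)
lemma psi_add4: "psi a b c (x + y) = psi a b c x + psi a b c y"
  by (simp add: psi_def e4_def e3_def algebra_simps)
lemma psi_scale4: "psi a b c (r *\<^sub>R x) = r * psi a b c x"
  by (simp add: psi_def e4_def e3_def algebra_simps)


definition gmat :: "(7 \<Rightarrow> real^7) \<Rightarrow> real^7^7" where
  "gmat b = (\<chi> i j. b j $ i)"

lemma gmat_mv: "gmat b *v x = (\<Sum>j\<in>UNIV. x$j *\<^sub>R b j)"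
  by (simp add: vec_eq_iff gmat_def matrix_vector_mult_def sum_component mult.commute)

lemma e_i_expand: "x = (\<Sum>i\<in>UNIV. x$i *\<^sub>R e_i i)"
  using basis_expansion[of x] by (simp add: e_i_def scalar_mult_eq_scaleR)

lemma gmat_e: "gmat b *v e_i k = b k"
proof -
  have "gmat b *v e_i k = (\<Sum>j\<in>UNIV. (if j = k then b j else 0))"
    unfolding gmat_mv by (rule sum.cong) (auto simp: e_i_def axis_def)
  then show ?thesis by simp
qed

lemma gmat_orth:
  assumes ON: "\<And>i j. b i \<bullet> b j = (if i = j then 1 else 0)"
  shows "transpose (gmat b) ** gmat b = mat 1" "gmat b ** transpose (gmat b) = mat 1"
proof -
  show 1: "transpose (gmat b) ** gmat b = mat 1"
    using ON by (simp add: vec_eq_iff gmat_def matrix_matrix_mult_def transpose_def mat_def inner_vec_def)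
  then show "gmat b ** transpose (gmat b) = mat 1"
    using matrix_left_right_inverse by blast
qed

lemma orth_inner:
  assumes "transpose g ** g = mat 1"
  shows "(g *v x) \<bullet> (g *v y) = x \<bullet> (y::real^7)"
proof -
  have "(g *v x) \<bullet> (g *v y) = (x v* transpose g) \<bullet> (g *v y)"
    by (simp add: vector_transpose_matrix)
  also have "\<dots> = x \<bullet> (transpose g *v (g *v y))" by (rule dot_lmul_matrix)
  also have "\<dots> = x \<bullet> y" using assms by (metis matrix_vector_mul_assoc matrix_vector_mul_lid)
  finally show ?thesis .
qed

lemma cross_expand: "cross7 x y = (\<Sum>(i,j)\<in>UNIV \<times> UNIV. (x$i * y$j) *\<^sub>R cross7 (e_i i) (e_i j))"
proof -
  have "cross7 x y = cross7 (\<Sum>i\<in>UNIV. x$i *\<^sub>R e_i i) (\<Sum>j\<in>UNIV. y$j *\<^sub>R e_i j)"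
    using e_i_expand[of x] e_i_expand[of y] by simp
  also have "\<dots> = (\<Sum>(i,j)\<in>UNIV \<times> UNIV. cross7 (x$i *\<^sub>R e_i i) (y$j *\<^sub>R e_i j))"
    by (rule bilinear_sum[OF bilinear_cross])
  also have "\<dots> = (\<Sum>(i,j)\<in>UNIV \<times> UNIV. (x$i * y$j) *\<^sub>R cross7 (e_i i) (e_i j))"
    by (simp add: cross_scale1 cross_scale2 mult.commute)
  finally show ?thesis .
qed

lemma gmat_cross:
  assumes CR: "\<And>i j. cross7 (b i) (b j) = gmat b *v cross7 (e_i i) (e_i j)"
  shows "cross7 (gmat b *v x) (gmat b *v y) = gmat b *v cross7 x y"
proof -
  have "cross7 (gmat b *v x) (gmat b *v y) = cross7 (\<Sum>i\<in>UNIV. x$i *\<^sub>R b i) (\<Sum>j\<in>UNIV. y$j *\<^sub>R b j)"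
    by (simp add: gmat_mv)
  also have "\<dots> = (\<Sum>(i,j)\<in>UNIV \<times> UNIV. cross7 (x$i *\<^sub>R b i) (y$j *\<^sub>R b j))"
    by (rule bilinear_sum[OF bilinear_cross])
  also have "\<dots> = (\<Sum>(i,j)\<in>UNIV \<times> UNIV. (x$i * y$j) *\<^sub>R (gmat b *v cross7 (e_i i) (e_i j)))"
    by (simp add: cross_scale1 cross_scale2 CR mult.commute)
  also have "\<dots> = gmat b *v (\<Sum>(i,j)\<in>UNIV \<times> UNIV. (x$i * y$j) *\<^sub>R cross7 (e_i i) (e_i j))"
    by (simp add: case_prod_unfold linear_sum[OF matrix_vector_mul_linear] linear_cmul[OF matrix_vector_mul_linear])
  also have "\<dots> = gmat b *v cross7 x y" using cross_expand[of x y] by simp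
  finally show ?thesis .
qed

lemma gmat_psi:
  assumes ON: "\<And>i j. b i \<bullet> b j = (if i = j then 1 else 0)"
  assumes CR: "\<And>i j. cross7 (b i) (b j) = gmat b *v cross7 (e_i i) (e_i j)"
  shows "psi (gmat b *v a) (gmat b *v c) (gmat b *v d) (gmat b *v f) = psi a c d f"
  using orth_inner[OF gmat_orth(1)[OF ON]]
  by (simp add: psi_cross gmat_cross[OF CR])


lemma ecross:
 "cross7 (e_i 1) (e_i 2) = e_i 3"
 "cross7 (e_i 1) (e_i 3) = - e_i 2"
 "cross7 (e_i 1) (e_i 4) = e_i 5"
 "cross7 (e_i 1) (e_i 5) = - e_i 4"
 "cross7 (e_i 1) (e_i 6) = - e_i 7"
 "cross7 (e_i 1) (e_i 7) = e_i 6"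
 "cross7 (e_i 2) (e_i 1) = - e_i 3"
 "cross7 (e_i 2) (e_i 3) = e_i 1"
 "cross7 (e_i 2) (e_i 4) = e_i 6"
 "cross7 (e_i 2) (e_i 5) = e_i 7"
 "cross7 (e_i 2) (e_i 6) = - e_i 4"
 "cross7 (e_i 2) (e_i 7) = - e_i 5"
 "cross7 (e_i 3) (e_i 1) = e_i 2"
 "cross7 (e_i 3) (e_i 2) = - e_i 1"
 "cross7 (e_i 3) (e_i 4) = e_i 7"
 "cross7 (e_i 3) (e_i 5) = - e_i 6"
 "cross7 (e_i 3) (e_i 6) = e_i 5"
 "cross7 (e_i 3) (e_i 7) = - e_i 4"
 "cross7 (e_i 4) (e_i 1) = - e_i 5"
 "cross7 (e_i 4) (e_i 2) = - e_i 6"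
 "cross7 (e_i 4) (e_i 3) = - e_i 7"
 "cross7 (e_i 4) (e_i 5) = e_i 1"
 "cross7 (e_i 4) (e_i 6) = e_i 2"
 "cross7 (e_i 4) (e_i 7) = e_i 3"
 "cross7 (e_i 5) (e_i 1) = e_i 4"
 "cross7 (e_i 5) (e_i 2) = - e_i 7"
 "cross7 (e_i 5) (e_i 3) = e_i 6"
 "cross7 (e_i 5) (e_i 4) = - e_i 1"
 "cross7 (e_i 5) (e_i 6) = - e_i 3"
 "cross7 (e_i 5) (e_i 7) = e_i 2"
 "cross7 (e_i 6) (e_i 1) = e_i 7"
 "cross7 (e_i 6) (e_i 2) = e_i 4"
 "cross7 (e_i 6) (e_i 3) = - e_i 5"
 "cross7 (e_i 6) (e_i 4) = - e_i 2"
 "cross7 (e_i 6) (e_i 5) = e_i 3"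
 "cross7 (e_i 6) (e_i 7) = - e_i 1"
 "cross7 (e_i 7) (e_i 1) = - e_i 6"
 "cross7 (e_i 7) (e_i 2) = e_i 5"
 "cross7 (e_i 7) (e_i 3) = e_i 4"
 "cross7 (e_i 7) (e_i 4) = - e_i 3"
 "cross7 (e_i 7) (e_i 5) = - e_i 2"
 "cross7 (e_i 7) (e_i 6) = e_i 1"
  by (simp_all add: vec_eq_iff forall_7 cross_c e_i_def axis_def)

lemma cross_neg1: "cross7 (- x) y = - cross7 x y"
  using cross_scale1[of "-1" x y] by simp
lemma cross_neg2: "cross7 y (- x) = - cross7 y x"
  using cross_scale2[of y "-1" x] by simp
lemma cross_cyc2: "cross7 x y \<bullet> z = cross7 z x \<bullet> y"
  by (metis cross_cyc)
lemma cross_orth1'[simp]: "x \<bullet> cross7 x y = 0"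
  using cross_orth1 by (simp add: inner_commute)
lemma cross_orth2'[simp]: "y \<bullet> cross7 x y = 0"
  using cross_orth2 by (simp add: inner_commute)
lemma M_orth: "x \<bullet> y = 0 \<Longrightarrow> x \<bullet> z = 0 \<Longrightarrow> y \<bullet> z = 0 \<Longrightarrow> cross7 x (cross7 y z) = - cross7 (cross7 x y) z"
  using cross_M[of x y z] by (simp add: eq_neg_iff_add_eq_0)
lemma cross_cross': "cross7 y (cross7 x y) = (y \<bullet> y) *\<^sub>R x - (x \<bullet> y) *\<^sub>R y"
  using cross_cross[of y x] cross_anti[of x y] by (simp add: cross_neg2 inner_commute)

lemma frame_facts:
  fixes b1 b2 b4 :: "real^7"
  assumes n11: "b1 \<bullet> b1 = 1" and n22: "b2 \<bullet> b2 = 1" and n44: "b4 \<bullet> b4 = 1"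
    and o12: "b1 \<bullet> b2 = 0" and o14: "b1 \<bullet> b4 = 0" and o24: "b2 \<bullet> b4 = 0"
    and o34: "cross7 b1 b2 \<bullet> b4 = 0"
  defines "b3 \<equiv> cross7 b1 b2" and "b5 \<equiv> cross7 b1 b4" and "b6 \<equiv> cross7 b2 b4" and "b7 \<equiv> cross7 (cross7 b1 b2) b4"
  defines "b \<equiv> (\<lambda>k::7. if k = 1 then b1 else if k = 2 then b2 else if k = 3 then b3 else
                 if k = 4 then b4 else if k = 5 then b5 else if k = 6 then b6 else b7)"
  shows "\<And>i j. b i \<bullet> b j = (if i = j then 1 else 0)"
    and "\<And>i j. cross7 (b i) (b j) = gmat b *v cross7 (e_i i) (e_i j)"
proof -
  have b7': "b7 = cross7 b3 b4" by (simp add: b7_def b3_def)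
  have o34': "b3 \<bullet> b4 = 0" using o34 b3_def by simp
  have n33: "b3 \<bullet> b3 = 1" using cross_norm[of b1 b2 b2] n11 n22 o12 b3_def by simp
  have o13: "b1 \<bullet> b3 = 0" using b3_def by (simp add: inner_commute)
  have o23: "b2 \<bullet> b3 = 0" using b3_def by (simp add: inner_commute)
  have o15: "b1 \<bullet> b5 = 0" "b4 \<bullet> b5 = 0" using b5_def by (simp_all add: inner_commute)
  have o25: "b2 \<bullet> b5 = 0" using b5_def cross_cyc2[of b1 b4 b2] cross_anti[of b2 b1] o34 b3_def
    by (simp add: inner_commute)
  have p13: "cross7 b1 b3 = - b2" using cross_cross[of b1 b2] n11 o12 b3_def by simp
  have p23: "cross7 b2 b3 = b1" using cross_cross'[where x=b1 and y=b2] n22 o12 b3_def by simp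
  have p31: "cross7 b3 b1 = b2" using cross_anti[of b3 b1] p13 by simp
  have p32: "cross7 b3 b2 = - b1" using cross_anti[of b3 b2] p23 by simp
  have o35: "b3 \<bullet> b5 = 0"
  proof -
    have "b5 \<bullet> b3 = cross7 b3 b1 \<bullet> b4" using cross_cyc2[of b1 b4 b3] b5_def by simp
    then show ?thesis using p31 o24 by (simp add: inner_commute)
  qed
  have o16: "b2 \<bullet> b6 = 0" "b4 \<bullet> b6 = 0" using b6_def by (simp_all add: inner_commute)
  have o26: "b1 \<bullet> b6 = 0" using b6_def cross_cyc2[of b2 b4 b1] o34 b3_def
    by (simp add: inner_commute)
  have o36: "b3 \<bullet> b6 = 0"
  proof -
    have "b6 \<bullet> b3 = cross7 b3 b2 \<bullet> b4" using cross_cyc2[of b2 b4 b3] b6_def by simp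
    then show ?thesis using p32 o14 by (simp add: inner_commute)
  qed
  have o17: "b3 \<bullet> b7 = 0" "b4 \<bullet> b7 = 0" using b7' by (simp_all add: inner_commute)
  have o27: "b1 \<bullet> b7 = 0"
  proof -
    have "b7 \<bullet> b1 = cross7 b1 b3 \<bullet> b4" using cross_cyc2[of b3 b4 b1] b7' by simp
    then show ?thesis using p13 o24 by (simp add: inner_commute)
  qed
  have o37: "b2 \<bullet> b7 = 0"
  proof -
    have "b7 \<bullet> b2 = cross7 b2 b3 \<bullet> b4" using cross_cyc2[of b3 b4 b2] b7' by simp
    then show ?thesis using p23 o14 by (simp add: inner_commute)
  qed
  have n55: "b5 \<bullet> b5 = 1" using cross_norm[of b1 b4 b4] n11 n44 o14 b5_def by simp
  have n66: "b6 \<bullet> b6 = 1" using cross_norm[of b2 b4 b4] n22 n44 o24 b6_def by simp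
  have n77: "b7 \<bullet> b7 = 1" using cross_norm[of b3 b4 b4] n33 n44 o34' b7' by simp
  have o56: "b5 \<bullet> b6 = 0" using cross_norm[of b4 b1 b2] cross_anti[of b1 b4] cross_anti[of b2 b4] b5_def b6_def o12 o14 o24
    by (simp add: inner_commute)
  have o57: "b5 \<bullet> b7 = 0" using cross_norm[of b4 b1 b3] cross_anti[of b1 b4] cross_anti[of b3 b4] b5_def b7' o13 o14 o34'
    by (simp add: inner_commute)
  have o67: "b6 \<bullet> b7 = 0" using cross_norm[of b4 b2 b3] cross_anti[of b2 b4] cross_anti[of b3 b4] b6_def b7' o23 o24 o34'
    by (simp add: inner_commute)
  note inner_facts = n11 n22 n33 n44 n55 n66 n77 o12 o13 o14 o15 o16 o17 o23 o24 o25 o26 o27 o34' o35 o36 o37 o56 o57 o67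
  show "\<And>i j. b i \<bullet> b j = (if i = j then 1 else 0)"
  proof -
    fix i j :: 7
    show "b i \<bullet> b j = (if i = j then 1 else 0)"
      using exhaust_7[of i] exhaust_7[of j] inner_facts
      by (auto simp: b_def inner_commute)
  qed
  have p12: "cross7 b1 b2 = b3" by (simp add: b3_def)
  have p14: "cross7 b1 b4 = b5" by (simp add: b5_def)
  have p24: "cross7 b2 b4 = b6" by (simp add: b6_def)
  have p34: "cross7 b3 b4 = b7" by (simp add: b7')
  have p15: "cross7 b1 b5 = - b4" using cross_cross[of b1 b4] n11 o14 b5_def by simp
  have p26: "cross7 b2 b6 = - b4" using cross_cross[of b2 b4] n22 o24 b6_def by simp
  have p37: "cross7 b3 b7 = - b4" using cross_cross[of b3 b4] n33 o34' b7' by simp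
  have p45: "cross7 b4 b5 = b1" using cross_cross'[where x=b1 and y=b4] n44 o14 b5_def by simp
  have p46: "cross7 b4 b6 = b2" using cross_cross'[where x=b2 and y=b4] n44 o24 b6_def by simp
  have p47: "cross7 b4 b7 = b3" using cross_cross'[where x=b3 and y=b4] n44 o34' b7' by simp
  have p16: "cross7 b1 b6 = - b7" using M_orth[of b1 b2 b4] o12 o14 o24 b6_def b7' b3_def by simp
  have p17: "cross7 b1 b7 = b6" using M_orth[of b1 b3 b4] o13 o14 o34' p13 b6_def b7' by (simp add: cross_neg1)
  have p25: "cross7 b2 b5 = b7" using M_orth[of b2 b1 b4] o12 o14 o24 b5_def b7' b3_def cross_anti[of b2 b1]
    by (simp add: inner_commute cross_neg1)
  have p27: "cross7 b2 b7 = - b5" using M_orth[of b2 b3 b4] o23 o24 o34' p23 b5_def b7' by simp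
  have p35: "cross7 b3 b5 = - b6" using M_orth[of b3 b1 b4] o13 o14 o34' b5_def b6_def cross_anti[of b3 b1] p13
    by (simp add: inner_commute cross_neg1)
  have p36: "cross7 b3 b6 = b5" using M_orth[of b3 b2 b4] o23 o24 o34' b5_def b6_def cross_anti[of b3 b2] p23
    by (simp add: inner_commute cross_neg1)
  have p56: "cross7 b5 b6 = - b3"
  proof -
    have "cross7 b6 b5 = - cross7 (cross7 b6 b1) b4" using M_orth[of b6 b1 b4] o26 o16 o14 b5_def
      by (simp add: inner_commute)
    also have "cross7 b6 b1 = b7" using cross_anti[of b6 b1] p16 by simp
    finally show ?thesis using cross_anti[of b5 b6] cross_anti[of b7 b4] p47 by simp
  qed
  have p57: "cross7 b5 b7 = b2"
  proof -
    have "cross7 b5 b7 = - cross7 (cross7 b5 b3) b4" using M_orth[of b5 b3 b4] o35 o15 o34' b7'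
      by (simp add: inner_commute)
    also have "cross7 b5 b3 = b6" using cross_anti[of b5 b3] p35 by simp
    finally show ?thesis using cross_anti[of b6 b4] p46 by simp
  qed
  have p67: "cross7 b6 b7 = - b1"
  proof -
    have "cross7 b6 b7 = - cross7 (cross7 b6 b3) b4" using M_orth[of b6 b3 b4] o36 o16 o34' b7'
      by (simp add: inner_commute)
    also have "cross7 b6 b3 = - b5" using cross_anti[of b6 b3] p36 by simp
    finally show ?thesis using cross_anti[of b5 b4] p45 by (simp add: cross_neg1)
  qed
  note prods = p12 p13 p14 p15 p16 p17 p23 p24 p25 p26 p27 p34 p35 p36 p37 p45 p46 p47 p56 p57 p67
  have prods': "cross7 x y = - z" if "cross7 y x = z" for x y z using that cross_anti[of x y] by simp
  note allp = prods prods'[OF p12] prods'[OF p13] prods'[OF p14] prods'[OF p15] prods'[OF p16]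
    prods'[OF p17] prods'[OF p23] prods'[OF p24] prods'[OF p25] prods'[OF p26] prods'[OF p27]
    prods'[OF p34] prods'[OF p35] prods'[OF p36] prods'[OF p37] prods'[OF p45] prods'[OF p46]
    prods'[OF p47] prods'[OF p56] prods'[OF p57] prods'[OF p67]
  have bvals: "b 1 = b1" "b 2 = b2" "b 3 = b3" "b 4 = b4" "b 5 = b5" "b 6 = b6" "b 7 = b7"
    by (simp_all add: b_def)
  have gneg: "gmat b *v (- e_i k) = - b k" for k
    by (simp add: linear_neg[OF matrix_vector_mul_linear] gmat_e)
  show "\<And>i j. cross7 (b i) (b j) = gmat b *v cross7 (e_i i) (e_i j)"
  proof -
    fix i j :: 7
    show "cross7 (b i) (b j) = gmat b *v cross7 (e_i i) (e_i j)"
      using exhaust_7[of i] exhaust_7[of j]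
      by (elim disjE) (simp_all add: ecross gneg gmat_e allp bvals)
  qed
qed


lemma frame_exists:
  assumes "associative P"
  obtains b where "\<And>i j. b i \<bullet> b j = (if i = j then 1 else 0)"
    "\<And>i j. cross7 (b i) (b j) = gmat b *v cross7 (e_i i) (e_i j)"
    "P = span {b 1, b 2, b 3}"
proof -
  have sP: "subspace P" and dP: "dim P = 3" and cP: "\<And>u v. u \<in> P \<Longrightarrow> v \<in> P \<Longrightarrow> cross7 u v \<in> P"
    using assms unfolding associative_def by auto
  obtain B where BP: "B \<subseteq> P" and Bo: "pairwise orthogonal B" and Bn: "\<And>x. x \<in> B \<Longrightarrow> norm x = 1"
    and "card B = dim P"
    using orthonormal_basis_subspace[OF sP] by blast
  then have "card B = 3" using dP by simp
  then obtain c1 c2 c3 where B: "B = {c1, c2, c3}" and d12: "c1 \<noteq> c2"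
    unfolding card_3_iff by blast
  have c1P: "c1 \<in> P" and c2P: "c2 \<in> P" using BP B by auto
  have n11: "c1 \<bullet> c1 = 1" and n22: "c2 \<bullet> c2 = 1" using Bn B by (auto simp: norm_eq_1)
  have o12: "c1 \<bullet> c2 = 0" using Bo B d12 by (auto simp: pairwise_def orthogonal_def)
  have "dim P < DIM(real^7)" using dP by simp
  then obtain x where x0: "x \<noteq> 0" and xo: "\<And>y. y \<in> span P \<Longrightarrow> orthogonal x y"
    using orthogonal_to_subspace_exists by blast
  define c4 where "c4 = x /\<^sub>R norm x"
  have "norm c4 = 1" using x0 by (simp add: c4_def)
  then have n44: "c4 \<bullet> c4 = 1" by (simp add: norm_eq_1)
  have o4: "c4 \<bullet> y = 0" if "y \<in> P" for y
    using xo[of y] that span_base[of y P] by (simp add: c4_def orthogonal_def)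
  have o14: "c1 \<bullet> c4 = 0" using o4[OF c1P] by (simp add: inner_commute)
  have o24: "c2 \<bullet> c4 = 0" using o4[OF c2P] by (simp add: inner_commute)
  have c3P: "cross7 c1 c2 \<in> P" using cP c1P c2P by blast
  have o34: "cross7 c1 c2 \<bullet> c4 = 0" using o4[OF c3P] by (simp add: inner_commute)
  define b where "b \<equiv> (\<lambda>k::7. if k = 1 then c1 else if k = 2 then c2 else if k = 3 then cross7 c1 c2 else
                 if k = 4 then c4 else if k = 5 then cross7 c1 c4 else if k = 6 then cross7 c2 c4
                 else cross7 (cross7 c1 c2) c4)"
  have ff1: "\<And>i j. b i \<bullet> b j = (if i = j then 1 else 0)"
    unfolding b_def by (rule frame_facts(1)[OF n11 n22 n44 o12 o14 o24 o34])
  have ff2: "\<And>i j. cross7 (b i) (b j) = gmat b *v cross7 (e_i i) (e_i j)"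
    unfolding b_def by (rule frame_facts(2)[OF n11 n22 n44 o12 o14 o24 o34])
  note ff = ff1 ff2
  have bv: "b 1 = c1" "b 2 = c2" "b 3 = cross7 c1 c2" by (simp_all add: b_def)
  have "P = span {b 1, b 2, b 3}"
  proof
    have sub: "{b 1, b 2, b 3} \<subseteq> P" using bv c1P c2P c3P by auto
    then show "span {b 1, b 2, b 3} \<subseteq> P" using sP by (simp add: span_minimal)
    have ne: "b 1 \<noteq> b 2" "b 1 \<noteq> b 3" "b 2 \<noteq> b 3"
    proof -
      show "b 1 \<noteq> b 2" using d12 bv by simp
      show "b 1 \<noteq> b 3"
      proof
        assume "b 1 = b 3"
        then have "c1 \<bullet> c1 = c1 \<bullet> cross7 c1 c2" using bv by simp
        then show False using n11 by simp
      qed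
      show "b 2 \<noteq> b 3"
      proof
        assume "b 2 = b 3"
        then have "c2 \<bullet> c2 = c2 \<bullet> cross7 c1 c2" using bv by simp
        then show False using n22 by simp
      qed
    qed
    have "independent {b 1, b 2, b 3}"
    proof (rule pairwise_orthogonal_independent)
      show "pairwise orthogonal {b 1, b 2, b 3}"
        using ff(1) by (auto simp: pairwise_def orthogonal_def)
      show "0 \<notin> {b 1, b 2, b 3}"
        using ff(1)[of 1 1] ff(1)[of 2 2] ff(1)[of 3 3] by auto
    qed
    moreover have "dim P \<le> card {b 1, b 2, b 3}" using dP ne by simp
    ultimately show "P \<subseteq> span {b 1, b 2, b 3}" using card_ge_dim_independent[OF sub] by blast
  qed
  then show ?thesis using that ff by blast
qed


definition Wm :: "real^7 \<Rightarrow> real^7 \<Rightarrow> real^7^7" where "Wm u v = op_of (wedge2 u v)"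
definition Pm :: "real^7 \<Rightarrow> real^7 \<Rightarrow> real^7^7" where "Pm u v = op_of (Psi2 u v)"
definition cnj :: "real^7^7 \<Rightarrow> real^7^7 \<Rightarrow> real^7^7" where "cnj g X = g ** X ** transpose g"

lemma op_of_entry: "op_of B $ p $ q = B (e_i q) (e_i p)"
  by (simp add: op_of_def)

lemma mv_e_expand: "transpose g *v e_i q = (\<Sum>k\<in>UNIV. g$q$k *\<^sub>R e_i k)"
proof -
  have "transpose g *v e_i q = (\<Sum>k\<in>UNIV. (transpose g *v e_i q)$k *\<^sub>R e_i k)" by (rule e_i_expand)
  also have "\<dots> = (\<Sum>k\<in>UNIV. g$q$k *\<^sub>R e_i k)"
    by (simp add: matrix_vector_mult_def transpose_def e_i_def axis_def if_distrib cong: if_cong)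
  finally show ?thesis .
qed

lemma op_of_conj:
  fixes B :: "real^7 \<Rightarrow> real^7 \<Rightarrow> real"
  assumes "bilinear B"
  shows "op_of (\<lambda>a b. B (transpose g *v a) (transpose g *v b)) = cnj g (op_of B)"
proof -
  have "B (transpose g *v e_i q) (transpose g *v e_i p) =
        (\<Sum>k\<in>UNIV. \<Sum>l\<in>UNIV. g$q$k * g$p$l * B (e_i k) (e_i l))" for p q
  proof -
    have "B (transpose g *v e_i q) (transpose g *v e_i p) =
          (\<Sum>(k,l)\<in>UNIV \<times> UNIV. B (g$q$k *\<^sub>R e_i k) (g$p$l *\<^sub>R e_i l))"
      unfolding mv_e_expand by (rule bilinear_sum[OF assms])
    also have "\<dots> = (\<Sum>(k,l)\<in>UNIV \<times> UNIV. g$q$k * g$p$l * B (e_i k) (e_i l))"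
      by (simp add: bilinear_lmul[OF assms] bilinear_rmul[OF assms] mult_ac)
    also have "\<dots> = (\<Sum>k\<in>UNIV. \<Sum>l\<in>UNIV. g$q$k * g$p$l * B (e_i k) (e_i l))"
      by (simp add: sum.cartesian_product)
    finally show ?thesis .
  qed
  then show ?thesis
    by (simp add: vec_eq_iff cnj_def op_of_entry matrix_matrix_mult_def transpose_def
        sum_distrib_left sum_distrib_right mult_ac)
qed

lemma mv_inner_transpose: "(g *v u) \<bullet> a = u \<bullet> (transpose g *v (a::real^7))"
  by (metis dot_lmul_matrix vector_transpose_matrix)

lemma bilinear_wedge: "bilinear (wedge2 u v)"
  unfolding bilinear_def wedge2_def
  by (auto intro!: linearI simp: inner_add_left inner_add_right algebra_simps)

lemma bilinear_psi34: "bilinear (\<lambda>a b. psi u v a b)"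
  unfolding bilinear_def
  by (auto intro!: linearI simp: psi_add3 psi_add4 psi_scale3 psi_scale4)

lemma Wm_conj: "Wm (g *v u) (g *v v) = cnj g (Wm u v)"
proof -
  have "wedge2 (g *v u) (g *v v) = (\<lambda>a b. wedge2 u v (transpose g *v a) (transpose g *v b))"
    by (simp add: fun_eq_iff wedge2_def mv_inner_transpose)
  then show ?thesis unfolding Wm_def using op_of_conj[OF bilinear_wedge] by simp
qed

lemma Pm_conj:
  assumes ON: "\<And>i j. b i \<bullet> b j = (if i = j then 1 else 0)"
  assumes CR: "\<And>i j. cross7 (b i) (b j) = gmat b *v cross7 (e_i i) (e_i j)"
  shows "Pm (gmat b *v u) (gmat b *v v) = cnj (gmat b) (Pm u v)"
proof -
  let ?g = "gmat b"
  have gg: "?g *v (transpose ?g *v a) = a" for a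
    using gmat_orth(2)[OF ON] by (metis matrix_vector_mul_assoc matrix_vector_mul_lid)
  have "Psi2 (?g *v u) (?g *v v) = (\<lambda>a b. psi u v (transpose ?g *v a) (transpose ?g *v b))"
  proof (intro ext)
    fix a c
    have "Psi2 (?g *v u) (?g *v v) a c = psi (?g *v u) (?g *v v) (?g *v (transpose ?g *v a)) (?g *v (transpose ?g *v c))"
      by (simp only: Psi2_def gg)
    also have "\<dots> = psi u v (transpose ?g *v a) (transpose ?g *v c)"
      by (rule gmat_psi[OF ON CR])
    finally show "Psi2 (?g *v u) (?g *v v) a c = psi u v (transpose ?g *v a) (transpose ?g *v c)" .
  qed
  moreover have "Psi2 u v = (\<lambda>a b. psi u v a b)" by (simp add: fun_eq_iff Psi2_def)
  ultimately show ?thesis unfolding Pm_def using op_of_conj[OF bilinear_psi34[of u v]] by simp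
qed

lemma bilinear_Wm: "bilinear Wm"
  unfolding bilinear_def
  by (auto intro!: linearI simp: vec_eq_iff Wm_def op_of_entry wedge2_def inner_add_left inner_add_right algebra_simps)

lemma bilinear_Pm: "bilinear Pm"
  unfolding bilinear_def
  by (auto intro!: linearI simp: vec_eq_iff Pm_def op_of_entry Psi2_def psi_add1 psi_add2 psi_scale1 psi_scale2)

lemma span_bil:
  fixes h :: "'a::real_vector \<Rightarrow> 'a \<Rightarrow> 'b::real_vector"
  assumes "bilinear h"
  shows "span {h u v | u v. u \<in> span S \<and> v \<in> span S} = span {h u v | u v. u \<in> S \<and> v \<in> S}"
proof
  let ?G = "{h u v | u v. u \<in> S \<and> v \<in> S}"
  show "span ?G \<subseteq> span {h u v | u v. u \<in> span S \<and> v \<in> span S}"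
    by (rule span_mono) (auto intro: span_base)
  have lin1: "linear (h s)" for s using assms by (simp add: bilinear_def)
  have lin2: "linear (\<lambda>u. h u v)" for v using assms by (simp add: bilinear_def)
  have step1: "h s v \<in> span ?G" if "s \<in> S" "v \<in> span S" for s v
  proof -
    have "subspace ((h s) -` span ?G)" by (rule linear_subspace_vimage[OF lin1 subspace_span])
    then have sub: "subspace {v. h s v \<in> span ?G}" by (simp add: vimage_def)
    show ?thesis using that(2)
      by (induct rule: span_induct) (use sub that(1) in \<open>auto intro: span_base\<close>)
  qed
  have step2: "h u v \<in> span ?G" if "u \<in> span S" "v \<in> span S" for u v
  proof -
    have "subspace ((\<lambda>u. h u v) -` span ?G)" by (rule linear_subspace_vimage[OF lin2 subspace_span])
    then have sub: "subspace {u. h u v \<in> span ?G}" by (simp add: vimage_def)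
    show ?thesis using that(1)
      by (induct rule: span_induct) (use sub step1 that(2) in auto)
  qed
  show "span {h u v | u v. u \<in> span S \<and> v \<in> span S} \<subseteq> span ?G"
    by (rule span_minimal) (auto intro: step2)
qed


definition U7 :: "real \<Rightarrow> real \<Rightarrow> real \<Rightarrow> real \<Rightarrow> real \<Rightarrow> real \<Rightarrow> 7 \<Rightarrow> 7 \<Rightarrow> real" where
  "U7 a1 a2 a3 b1 b2 b3 i j = (if i = 1 \<and> j = 2 then - a3 else if i = 1 \<and> j = 3 then a2 else if i = 2 \<and> j = 3 then - a1 else if i = 4 \<and> j = 5 then b1 else if i = 6 \<and> j = 7 then - b1 else if i = 4 \<and> j = 6 then b2 else if i = 5 \<and> j = 7 then b2 else if i = 4 \<and> j = 7 then b3 else if i = 5 \<and> j = 6 then - b3 else 0)"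
definition Mk :: "real \<Rightarrow> real \<Rightarrow> real \<Rightarrow> real \<Rightarrow> real \<Rightarrow> real \<Rightarrow> real^7^7" where
  "Mk a1 a2 a3 b1 b2 b3 = (\<chi> i j. U7 a1 a2 a3 b1 b2 b3 i j - U7 a1 a2 a3 b1 b2 b3 j i)"
definition U4 :: "real \<Rightarrow> real \<Rightarrow> real \<Rightarrow> real \<Rightarrow> real \<Rightarrow> real \<Rightarrow> 4 \<Rightarrow> 4 \<Rightarrow> real" where
  "U4 a1 a2 a3 b1 b2 b3 i j = (if i = 1 \<and> j = 2 then a1 / 2 + b1 else if i = 3 \<and> j = 4 then a1 / 2 - b1 else if i = 1 \<and> j = 3 then a2 / 2 + b2 else if i = 2 \<and> j = 4 then - a2 / 2 + b2 else if i = 1 \<and> j = 4 then - a3 / 2 + b3 else if i = 2 \<and> j = 3 then - a3 / 2 - b3 else 0)"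
definition Mk4 :: "real \<Rightarrow> real \<Rightarrow> real \<Rightarrow> real \<Rightarrow> real \<Rightarrow> real \<Rightarrow> real^4^4" where
  "Mk4 a1 a2 a3 b1 b2 b3 = (\<chi> i j. U4 a1 a2 a3 b1 b2 b3 i j - U4 a1 a2 a3 b1 b2 b3 j i)"

lemma Mk_e:
 "Mk a1 a2 a3 b1 b2 b3 $ 1 $ 1 = 0"
 "Mk a1 a2 a3 b1 b2 b3 $ 1 $ 2 = (- a3)"
 "Mk a1 a2 a3 b1 b2 b3 $ 1 $ 3 = (a2)"
 "Mk a1 a2 a3 b1 b2 b3 $ 1 $ 4 = 0"
 "Mk a1 a2 a3 b1 b2 b3 $ 1 $ 5 = 0"
 "Mk a1 a2 a3 b1 b2 b3 $ 1 $ 6 = 0"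
 "Mk a1 a2 a3 b1 b2 b3 $ 1 $ 7 = 0"
 "Mk a1 a2 a3 b1 b2 b3 $ 2 $ 1 = - (- a3)"
 "Mk a1 a2 a3 b1 b2 b3 $ 2 $ 2 = 0"
 "Mk a1 a2 a3 b1 b2 b3 $ 2 $ 3 = (- a1)"
 "Mk a1 a2 a3 b1 b2 b3 $ 2 $ 4 = 0"
 "Mk a1 a2 a3 b1 b2 b3 $ 2 $ 5 = 0"
 "Mk a1 a2 a3 b1 b2 b3 $ 2 $ 6 = 0"
 "Mk a1 a2 a3 b1 b2 b3 $ 2 $ 7 = 0"
 "Mk a1 a2 a3 b1 b2 b3 $ 3 $ 1 = - (a2)"
 "Mk a1 a2 a3 b1 b2 b3 $ 3 $ 2 = - (- a1)"
 "Mk a1 a2 a3 b1 b2 b3 $ 3 $ 3 = 0"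
 "Mk a1 a2 a3 b1 b2 b3 $ 3 $ 4 = 0"
 "Mk a1 a2 a3 b1 b2 b3 $ 3 $ 5 = 0"
 "Mk a1 a2 a3 b1 b2 b3 $ 3 $ 6 = 0"
 "Mk a1 a2 a3 b1 b2 b3 $ 3 $ 7 = 0"
 "Mk a1 a2 a3 b1 b2 b3 $ 4 $ 1 = 0"
 "Mk a1 a2 a3 b1 b2 b3 $ 4 $ 2 = 0"
 "Mk a1 a2 a3 b1 b2 b3 $ 4 $ 3 = 0"
 "Mk a1 a2 a3 b1 b2 b3 $ 4 $ 4 = 0"
 "Mk a1 a2 a3 b1 b2 b3 $ 4 $ 5 = (b1)"
 "Mk a1 a2 a3 b1 b2 b3 $ 4 $ 6 = (b2)"
 "Mk a1 a2 a3 b1 b2 b3 $ 4 $ 7 = (b3)"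
 "Mk a1 a2 a3 b1 b2 b3 $ 5 $ 1 = 0"
 "Mk a1 a2 a3 b1 b2 b3 $ 5 $ 2 = 0"
 "Mk a1 a2 a3 b1 b2 b3 $ 5 $ 3 = 0"
 "Mk a1 a2 a3 b1 b2 b3 $ 5 $ 4 = - (b1)"
 "Mk a1 a2 a3 b1 b2 b3 $ 5 $ 5 = 0"
 "Mk a1 a2 a3 b1 b2 b3 $ 5 $ 6 = (- b3)"
 "Mk a1 a2 a3 b1 b2 b3 $ 5 $ 7 = (b2)"
 "Mk a1 a2 a3 b1 b2 b3 $ 6 $ 1 = 0"
 "Mk a1 a2 a3 b1 b2 b3 $ 6 $ 2 = 0"
 "Mk a1 a2 a3 b1 b2 b3 $ 6 $ 3 = 0"
 "Mk a1 a2 a3 b1 b2 b3 $ 6 $ 4 = - (b2)"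
 "Mk a1 a2 a3 b1 b2 b3 $ 6 $ 5 = - (- b3)"
 "Mk a1 a2 a3 b1 b2 b3 $ 6 $ 6 = 0"
 "Mk a1 a2 a3 b1 b2 b3 $ 6 $ 7 = (- b1)"
 "Mk a1 a2 a3 b1 b2 b3 $ 7 $ 1 = 0"
 "Mk a1 a2 a3 b1 b2 b3 $ 7 $ 2 = 0"
 "Mk a1 a2 a3 b1 b2 b3 $ 7 $ 3 = 0"
 "Mk a1 a2 a3 b1 b2 b3 $ 7 $ 4 = - (b3)"
 "Mk a1 a2 a3 b1 b2 b3 $ 7 $ 5 = - (b2)"
 "Mk a1 a2 a3 b1 b2 b3 $ 7 $ 6 = - (- b1)"
 "Mk a1 a2 a3 b1 b2 b3 $ 7 $ 7 = 0"
  by (simp_all add: Mk_def U7_def)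

lemma Mk4_e:
 "Mk4 a1 a2 a3 b1 b2 b3 $ 1 $ 1 = 0"
 "Mk4 a1 a2 a3 b1 b2 b3 $ 1 $ 2 = (a1 / 2 + b1)"
 "Mk4 a1 a2 a3 b1 b2 b3 $ 1 $ 3 = (a2 / 2 + b2)"
 "Mk4 a1 a2 a3 b1 b2 b3 $ 1 $ 4 = (- a3 / 2 + b3)"
 "Mk4 a1 a2 a3 b1 b2 b3 $ 2 $ 1 = - (a1 / 2 + b1)"
 "Mk4 a1 a2 a3 b1 b2 b3 $ 2 $ 2 = 0"
 "Mk4 a1 a2 a3 b1 b2 b3 $ 2 $ 3 = (- a3 / 2 - b3)"
 "Mk4 a1 a2 a3 b1 b2 b3 $ 2 $ 4 = (- a2 / 2 + b2)"
 "Mk4 a1 a2 a3 b1 b2 b3 $ 3 $ 1 = - (a2 / 2 + b2)"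
 "Mk4 a1 a2 a3 b1 b2 b3 $ 3 $ 2 = - (- a3 / 2 - b3)"
 "Mk4 a1 a2 a3 b1 b2 b3 $ 3 $ 3 = 0"
 "Mk4 a1 a2 a3 b1 b2 b3 $ 3 $ 4 = (a1 / 2 - b1)"
 "Mk4 a1 a2 a3 b1 b2 b3 $ 4 $ 1 = - (- a3 / 2 + b3)"
 "Mk4 a1 a2 a3 b1 b2 b3 $ 4 $ 2 = - (- a2 / 2 + b2)"
 "Mk4 a1 a2 a3 b1 b2 b3 $ 4 $ 3 = - (a1 / 2 - b1)"
 "Mk4 a1 a2 a3 b1 b2 b3 $ 4 $ 4 = 0"
  by (simp_all add: Mk4_def U4_def)

lemma Mk_lie: "lie_bracket (Mk a1 a2 a3 b1 b2 b3) (Mk c1 c2 c3 d1 d2 d3) =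
  Mk (a2*c3 - a3*c2) (a3*c1 - a1*c3) (a1*c2 - a2*c1) (2*(b2*d3 - b3*d2)) (2*(b3*d1 - b1*d3)) (2*(b1*d2 - b2*d1))"
  by (simp add: vec_eq_iff forall_7 lie_bracket_def matrix_matrix_mult_def sum_7 Mk_e algebra_simps)

lemma Mk4_lie: "lie_bracket (Mk4 a1 a2 a3 b1 b2 b3) (Mk4 c1 c2 c3 d1 d2 d3) =
  Mk4 (a2*c3 - a3*c2) (a3*c1 - a1*c3) (a1*c2 - a2*c1) (2*(b2*d3 - b3*d2)) (2*(b3*d1 - b1*d3)) (2*(b1*d2 - b2*d1))"
  by (simp add: vec_eq_iff forall_4 lie_bracket_def matrix_matrix_mult_def sum_4 Mk4_e field_simps;
      (simp add: algebra_simps)?)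

lemma Mk_add: "Mk a1 a2 a3 b1 b2 b3 + Mk c1 c2 c3 d1 d2 d3 = Mk (a1+c1) (a2+c2) (a3+c3) (b1+d1) (b2+d2) (b3+d3)"
  by (simp add: vec_eq_iff forall_7 Mk_e)
lemma Mk_scale: "r *\<^sub>R Mk a1 a2 a3 b1 b2 b3 = Mk (r*a1) (r*a2) (r*a3) (r*b1) (r*b2) (r*b3)"
  by (simp add: vec_eq_iff forall_7 Mk_e)
lemma Mk_zero: "Mk 0 0 0 0 0 0 = 0"
  by (simp add: vec_eq_iff forall_7 Mk_e)
lemma Mk_eq: "Mk a1 a2 a3 b1 b2 b3 = Mk c1 c2 c3 d1 d2 d3 \<Longrightarrow> a1 = c1 \<and> a2 = c2 \<and> a3 = c3 \<and> b1 = d1 \<and> b2 = d2 \<and> b3 = d3"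
  by (simp add: vec_eq_iff forall_7 Mk_e)
lemma Mk_skew: "transpose (Mk a1 a2 a3 b1 b2 b3) = - Mk a1 a2 a3 b1 b2 b3"
  by (simp add: vec_eq_iff forall_7 Mk_e transpose_def)

lemma form_of_e: "form_of X (e_i i) (e_i j) = X $ j $ i"
  by (simp add: form_of_def e_i_def inner_axis matrix_vector_mult_basis column_def)

lemma form_inner_alt: "form_inner X Y = (\<Sum>i\<in>UNIV. \<Sum>j\<in>UNIV. X $ j $ i * Y $ j $ i)"
  by (simp add: form_inner_def form_of_e)

lemma Mk_orth: "form_inner (Mk a1 a2 a3 0 0 0) (Mk 0 0 0 b1 b2 b3) = 0"
  by (simp add: form_inner_alt sum_7 Mk_e)

lemma Mk4_add: "Mk4 a1 a2 a3 b1 b2 b3 + Mk4 c1 c2 c3 d1 d2 d3 = Mk4 (a1+c1) (a2+c2) (a3+c3) (b1+d1) (b2+d2) (b3+d3)"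
  by (simp add: vec_eq_iff forall_4 Mk4_e field_simps)
lemma Mk4_scale: "r *\<^sub>R Mk4 a1 a2 a3 b1 b2 b3 = Mk4 (r*a1) (r*a2) (r*a3) (r*b1) (r*b2) (r*b3)"
  by (simp add: vec_eq_iff forall_4 Mk4_e algebra_simps)
lemma Mk4_eq: "Mk4 a1 a2 a3 b1 b2 b3 = Mk4 c1 c2 c3 d1 d2 d3 \<Longrightarrow> a1 = c1 \<and> a2 = c2 \<and> a3 = c3 \<and> b1 = d1 \<and> b2 = d2 \<and> b3 = d3"
  by (simp add: vec_eq_iff forall_4 Mk4_e)
lemma Mk4_skew: "transpose (Mk4 a1 a2 a3 b1 b2 b3) = - Mk4 a1 a2 a3 b1 b2 b3"
  by (simp add: vec_eq_iff forall_4 Mk4_e transpose_def)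
lemma Mk4_surj:
  assumes "transpose M = - (M::real^4^4)"
  shows "M = Mk4 (M$1$2 + M$3$4) (M$1$3 - M$2$4) (- (M$1$4 + M$2$3)) ((M$1$2 - M$3$4)/2) ((M$1$3 + M$2$4)/2) ((M$1$4 - M$2$3)/2)"
proof -
  have sk: "M$i$j = - M$j$i" for i j
  proof -
    have "transpose M $ j $ i = (- M) $ j $ i" using assms by simp
    then show ?thesis by (simp add: transpose_def)
  qed
  have d: "M$i$i = 0" for i using sk[of i i] by simp
  note s = sk[of 2 1] sk[of 3 1] sk[of 4 1] sk[of 3 2] sk[of 4 2] sk[of 4 3]
  show ?thesis
    apply (simp only: vec_eq_iff forall_4)
    apply (intro conjI)
    apply (simp_all add: Mk4_e d s)
    apply (simp_all add: field_simps)
    done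
qed

definition f0 :: "real^7^7 \<Rightarrow> real^4^4" where
  "f0 X = Mk4 (X$3$2) (X$1$3) (X$2$1) (X$4$5) (X$4$6) (X$4$7)"

lemma f0_Mk: "f0 (Mk a1 a2 a3 b1 b2 b3) = Mk4 a1 a2 a3 b1 b2 b3"
  by (simp add: f0_def Mk_e)

lemma linear_f0: "linear f0"
  by (rule linearI) (simp_all add: f0_def Mk4_add Mk4_scale)


lemma Pm_e:
  "Pm (e_i 2) (e_i 3) = Mk 0 0 0 1 0 0"
  "Pm (e_i 3) (e_i 1) = Mk 0 0 0 0 1 0"
  "Pm (e_i 1) (e_i 2) = Mk 0 0 0 0 0 1"
  "Pm (e_i 3) (e_i 2) = Mk 0 0 0 (-1) 0 0"
  "Pm (e_i 1) (e_i 3) = Mk 0 0 0 0 (-1) 0"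
  "Pm (e_i 2) (e_i 1) = Mk 0 0 0 0 0 (-1)"
  "Pm (e_i 1) (e_i 1) = Mk 0 0 0 0 0 0"
  "Pm (e_i 2) (e_i 2) = Mk 0 0 0 0 0 0"
  "Pm (e_i 3) (e_i 3) = Mk 0 0 0 0 0 0"
  by (simp_all add: vec_eq_iff forall_7 Pm_def op_of_entry Psi2_def psi_def e4_def e3_def e_i_def axis_def Mk_e)

lemma Wm_e:
  "Wm (e_i 2) (e_i 3) = Mk 1 0 0 0 0 0"
  "Wm (e_i 3) (e_i 1) = Mk 0 1 0 0 0 0"
  "Wm (e_i 1) (e_i 2) = Mk 0 0 1 0 0 0"
  "Wm (e_i 3) (e_i 2) = Mk (-1) 0 0 0 0 0"
  "Wm (e_i 1) (e_i 3) = Mk 0 (-1) 0 0 0 0"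
  "Wm (e_i 2) (e_i 1) = Mk 0 0 (-1) 0 0 0"
  "Wm (e_i 1) (e_i 1) = Mk 0 0 0 0 0 0"
  "Wm (e_i 2) (e_i 2) = Mk 0 0 0 0 0 0"
  "Wm (e_i 3) (e_i 3) = Mk 0 0 0 0 0 0"
  by (simp_all add: vec_eq_iff forall_7 Wm_def op_of_entry wedge2_def e_i_def inner_axis_axis Mk_e)

lemma span3:
  fixes F :: "real \<Rightarrow> real \<Rightarrow> real \<Rightarrow> 'a::real_vector"
  assumes add: "\<And>a b c a' b' c'. F a b c + F a' b' c' = F (a+a') (b+b') (c+c')"
    and scale: "\<And>r a b c. r *\<^sub>R F a b c = F (r*a) (r*b) (r*c)"
    and gen: "G \<subseteq> {F a b c | a b c. True}" "F 1 0 0 \<in> G" "F 0 1 0 \<in> G" "F 0 0 1 \<in> G"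
  shows "span G = {F a b c | a b c. True}"
proof (rule span_subspace)
  show "G \<subseteq> {F a b c | a b c. True}" by (rule gen(1))
  show "subspace {F a b c | a b c. True}"
    unfolding subspace_def
  proof (intro conjI ballI allI)
    show "0 \<in> {F a b c | a b c. True}" using scale[of 0 0 0 0] by auto
    fix x y assume "x \<in> {F a b c | a b c. True}" "y \<in> {F a b c | a b c. True}"
    then show "x + y \<in> {F a b c | a b c. True}" using add by blast
  next
    fix r :: real and x assume "x \<in> {F a b c | a b c. True}"
    then show "r *\<^sub>R x \<in> {F a b c | a b c. True}" using scale by blast
  qed
  show "{F a b c | a b c. True} \<subseteq> span G"
  proof clarify
    fix a b c
    have "F a b c = a *\<^sub>R F 1 0 0 + b *\<^sub>R F 0 1 0 + c *\<^sub>R F 0 0 1"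
      by (simp add: scale add)
    then show "F a b c \<in> span G"
      using gen by (metis span_add span_base span_scale)
  qed
qed

definition "E3 = {e_i 1, e_i 2, e_i 3}"
definition "L0 = {Mk a b c 0 0 0 | a b c. True}"
definition "Q0 = {Mk 0 0 0 a b c | a b c. True}"
definition "T0 = {Mk a1 a2 a3 b1 b2 b3 | a1 a2 a3 b1 b2 b3. True}"

lemma span_Wm: "span {Wm s t | s t. s \<in> E3 \<and> t \<in> E3} = L0"
  unfolding L0_def
  by (rule span3[where F="\<lambda>a b c. Mk a b c 0 0 0"])
     (auto simp: Mk_add Mk_scale E3_def Wm_e, (metis Wm_e)+)

lemma span_Pm: "span {Pm s t | s t. s \<in> E3 \<and> t \<in> E3} = Q0"
  unfolding Q0_def
  by (rule span3[where F="\<lambda>a b c. Mk 0 0 0 a b c"])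
     (auto simp: Mk_add Mk_scale E3_def Pm_e, (metis Pm_e)+)


lemma mm_diff_l: "(A::real^7^7) ** (B - C) = A ** B - A ** C"
  by (simp add: matrix_matrix_mult_def vec_eq_iff sum_subtractf algebra_simps)
lemma mm_diff_r: "((B::real^7^7) - C) ** A = B ** A - C ** A"
  by (simp add: matrix_matrix_mult_def vec_eq_iff sum_subtractf algebra_simps)
lemma mm_add_r: "((B::real^7^7) + C) ** A = B ** A + C ** A"
  by (simp add: matrix_matrix_mult_def vec_eq_iff sum.distrib algebra_simps)

lemma mm_neg_l: "(A::real^7^7) ** (- B) = - (A ** B)"
  by (simp add: matrix_matrix_mult_def vec_eq_iff sum_negf)
lemma mm_neg_r: "(- B::real^7^7) ** A = - (B ** A)"
  by (simp add: matrix_matrix_mult_def vec_eq_iff sum_negf)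

lemma linear_conj: "linear (cnj h)"
  by (rule linearI)
     (simp_all add: cnj_def matrix_add_ldistrib mm_add_r scalar_matrix_assoc matrix_scalar_ac)

lemma conj_inv:
  assumes "transpose h ** h = mat 1"
  shows "cnj (transpose h) (cnj h X) = X"
proof -
  have "transpose h ** (h ** X ** transpose h) ** h = (transpose h ** h) ** X ** (transpose h ** h)"
    by (simp add: matrix_mul_assoc)
  then show ?thesis using assms by (simp add: cnj_def)
qed

lemma conj_lie:
  assumes "transpose h ** h = mat 1"
  shows "cnj h (lie_bracket X Y) = lie_bracket (cnj h X) (cnj h Y)"
proof -
  have e: "(h ** X ** transpose h) ** (h ** Y ** transpose h) = h ** (X ** Y) ** transpose h" for X Y
  proof -
    have "(h ** X ** transpose h) ** (h ** Y ** transpose h) = h ** X ** (transpose h ** h) ** Y ** transpose h"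
      by (simp add: matrix_mul_assoc)
    then show ?thesis using assms by (simp add: matrix_mul_assoc)
  qed
  show ?thesis
    by (simp add: cnj_def lie_bracket_def e mm_diff_l mm_diff_r)
qed

lemma conj_skew:
  assumes "transpose X = - X"
  shows "transpose (cnj h X) = - cnj h X"
proof -
  have "transpose (cnj h X) = h ** transpose X ** transpose h"
    by (simp add: cnj_def matrix_transpose_mul matrix_mul_assoc)
  also have "\<dots> = h ** (- X) ** transpose h" using assms by simp
  also have "\<dots> = - cnj h X"
    by (simp add: cnj_def mm_neg_l mm_neg_r)
  finally show ?thesis .
qed

lemma form_inner_trace: "form_inner X Y = trace (transpose X ** Y)"
  by (simp add: form_inner_alt trace_def matrix_matrix_mult_def transpose_def)

lemma conj_inner:
  assumes "transpose h ** h = mat 1"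
  shows "form_inner (cnj h X) (cnj h Y) = form_inner X Y"
proof -
  have "transpose (cnj h X) ** cnj h Y = h ** (transpose X ** Y) ** transpose h"
  proof -
    have "transpose (cnj h X) ** cnj h Y = h ** transpose X ** (transpose h ** h) ** Y ** transpose h"
      by (simp add: cnj_def matrix_transpose_mul matrix_mul_assoc)
    then show ?thesis using assms by (simp add: matrix_mul_assoc)
  qed
  then have "trace (transpose (cnj h X) ** cnj h Y) = trace ((transpose X ** Y) ** (transpose h ** h))"
    by (metis trace_mul_sym matrix_mul_assoc)
  then show ?thesis using assms by (simp add: form_inner_trace)
qed

lemma image_pairs:
  assumes "\<And>u v. h (f u) (f v) = F (h u v)"
  shows "{h u v | u v. u \<in> f ` S \<and> v \<in> f ` S} = F ` {h u v | u v. u \<in> S \<and> v \<in> S}"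
  using assms by auto (metis imageI)


theorem proposition4p8:
  fixes P :: "(real^7) set"
  assumes "associative P"
  shows "Lambda2 P \<inter> PsiSpan P = {0}
    \<and> (\<forall>X\<in>Lambda2 P. \<forall>Y\<in>PsiSpan P. form_inner X Y = 0)
    \<and> subspace (Theta P)
    \<and> Theta P \<subseteq> (so :: (real^7^7) set)
    \<and> (\<forall>X\<in>Theta P. \<forall>Y\<in>Theta P. lie_bracket X Y \<in> Theta P)
    \<and> (\<exists>f :: real^7^7 \<Rightarrow> real^4^4. linear f \<and> bij_betw f (Theta P) so
         \<and> (\<forall>X\<in>Theta P. \<forall>Y\<in>Theta P. f (lie_bracket X Y) = lie_bracket (f X) (f Y)))"
proof -
  obtain b where ON: "\<And>i j. b i \<bullet> b j = (if i = j then 1 else 0)"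
    and CR: "\<And>i j. cross7 (b i) (b j) = gmat b *v cross7 (e_i i) (e_i j)"
    and Pb: "P = span {b 1, b 2, b 3}"
    using frame_exists[OF assms] by blast
  define g where "g = gmat b"
  define C where "C = cnj g"
  define Ci where "Ci = cnj (transpose g)"
  have gTg: "transpose g ** g = mat 1" and ggT: "g ** transpose g = mat 1"
    using gmat_orth[OF ON] by (simp_all add: g_def)
  have gTg': "transpose (transpose g) ** transpose g = mat 1" using ggT by simp
  have CiC: "Ci (C X) = X" for X using conj_inv[OF gTg] by (simp add: C_def Ci_def)
  have CCi: "C (Ci X) = X" for X using conj_inv[OF gTg'] by (simp add: C_def Ci_def)
  have linC: "linear C" by (simp add: C_def linear_conj)
  have linCi: "linear Ci" by (simp add: Ci_def linear_conj)
  have Pg: "P = span ((*v) g ` E3)"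
    using Pb by (simp add: E3_def g_def gmat_e)
  have LP: "Lambda2 P = C ` L0"
  proof -
    have "Lambda2 P = span {Wm u v | u v. u \<in> P \<and> v \<in> P}"
      by (simp add: Lambda2_def Wm_def)
    also have "\<dots> = span {Wm u v | u v. u \<in> (*v) g ` E3 \<and> v \<in> (*v) g ` E3}"
      unfolding Pg by (rule span_bil[OF bilinear_Wm])
    also have "{Wm u v | u v. u \<in> (*v) g ` E3 \<and> v \<in> (*v) g ` E3} = C ` {Wm u v | u v. u \<in> E3 \<and> v \<in> E3}"
      by (rule image_pairs) (simp add: C_def Wm_conj)
    also have "span (C ` {Wm u v | u v. u \<in> E3 \<and> v \<in> E3}) = C ` L0"
      by (simp add: span_linear_image[OF linC] span_Wm)
    finally show ?thesis .
  qed
  have QP: "PsiSpan P = C ` Q0"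
  proof -
    have "PsiSpan P = span {Pm u v | u v. u \<in> P \<and> v \<in> P}"
      by (simp add: PsiSpan_def Pm_def)
    also have "\<dots> = span {Pm u v | u v. u \<in> (*v) g ` E3 \<and> v \<in> (*v) g ` E3}"
      unfolding Pg by (rule span_bil[OF bilinear_Pm])
    also have "{Pm u v | u v. u \<in> (*v) g ` E3 \<and> v \<in> (*v) g ` E3} = C ` {Pm u v | u v. u \<in> E3 \<and> v \<in> E3}"
      by (rule image_pairs) (simp add: C_def g_def Pm_conj[OF ON CR])
    also have "span (C ` {Pm u v | u v. u \<in> E3 \<and> v \<in> E3}) = C ` Q0"
      by (simp add: span_linear_image[OF linC] span_Pm)
    finally show ?thesis .
  qed
  have TP: "Theta P = C ` T0"
  proof -
    have "Theta P = {X + Y | X Y. X \<in> C ` L0 \<and> Y \<in> C ` Q0}"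
      by (simp add: Theta_def LP QP)
    also have "\<dots> = C ` T0"
    proof
      show "{X + Y | X Y. X \<in> C ` L0 \<and> Y \<in> C ` Q0} \<subseteq> C ` T0"
      proof clarify
        fix X0 Y0 assume "X0 \<in> L0" "Y0 \<in> Q0"
        then obtain a1 a2 a3 b1 b2 b3 where "X0 = Mk a1 a2 a3 0 0 0" "Y0 = Mk 0 0 0 b1 b2 b3"
          by (auto simp: L0_def Q0_def)
        then have "C X0 + C Y0 = C (Mk a1 a2 a3 b1 b2 b3)"
          by (simp add: linear_add[OF linC, symmetric] Mk_add)
        moreover have "Mk a1 a2 a3 b1 b2 b3 \<in> T0" unfolding T0_def by blast
        ultimately show "C X0 + C Y0 \<in> C ` T0" by (metis image_eqI)
      qed
      show "C ` T0 \<subseteq> {X + Y | X Y. X \<in> C ` L0 \<and> Y \<in> C ` Q0}"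
      proof
        fix Z assume "Z \<in> C ` T0"
        then obtain a1 a2 a3 b1 b2 b3 where Z: "Z = C (Mk a1 a2 a3 b1 b2 b3)"
          by (auto simp: T0_def)
        have "C (Mk a1 a2 a3 b1 b2 b3) = C (Mk a1 a2 a3 0 0 0) + C (Mk 0 0 0 b1 b2 b3)"
          by (simp add: linear_add[OF linC, symmetric] Mk_add)
        moreover have "Mk a1 a2 a3 0 0 0 \<in> L0" "Mk 0 0 0 b1 b2 b3 \<in> Q0"
          unfolding L0_def Q0_def by blast+
        ultimately show "Z \<in> {X + Y | X Y. X \<in> C ` L0 \<and> Y \<in> C ` Q0}"
          unfolding Z by blast
      qed
    qed
    finally show ?thesis .
  qed
  have T0sub: "subspace T0"
    unfolding subspace_def T0_def
  proof (intro conjI ballI allI)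
    show "0 \<in> {Mk a1 a2 a3 b1 b2 b3 | a1 a2 a3 b1 b2 b3. True}"
      using Mk_zero by (metis (mono_tags, lifting) mem_Collect_eq)
    fix x y assume "x \<in> {Mk a1 a2 a3 b1 b2 b3 | a1 a2 a3 b1 b2 b3. True}" "y \<in> {Mk a1 a2 a3 b1 b2 b3 | a1 a2 a3 b1 b2 b3. True}"
    then show "x + y \<in> {Mk a1 a2 a3 b1 b2 b3 | a1 a2 a3 b1 b2 b3. True}" by (auto simp: Mk_add; blast)
  next
    fix r :: real and x assume "x \<in> {Mk a1 a2 a3 b1 b2 b3 | a1 a2 a3 b1 b2 b3. True}"
    then show "r *\<^sub>R x \<in> {Mk a1 a2 a3 b1 b2 b3 | a1 a2 a3 b1 b2 b3. True}" by (auto simp: Mk_scale; blast)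
  qed
  have lieC: "C (lie_bracket X Y) = lie_bracket (C X) (C Y)" for X Y
    using conj_lie[OF gTg] by (simp add: C_def)
  have lieCi: "Ci (lie_bracket X Y) = lie_bracket (Ci X) (Ci Y)" for X Y
    using conj_lie[OF gTg'] by (simp add: Ci_def)
  have part1: "Lambda2 P \<inter> PsiSpan P = {0}"
  proof
    show "{0} \<subseteq> Lambda2 P \<inter> PsiSpan P"
      by (simp add: Lambda2_def PsiSpan_def span_zero)
    show "Lambda2 P \<inter> PsiSpan P \<subseteq> {0}"
    proof
      fix Z assume "Z \<in> Lambda2 P \<inter> PsiSpan P"
      then have "Z \<in> C ` L0" "Z \<in> C ` Q0" by (simp_all add: LP QP)
      then obtain X0 Y0 where X0: "X0 \<in> L0" "Z = C X0" and Y0: "Y0 \<in> Q0" "Z = C Y0" by blast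
      from X0(1) obtain a1 a2 a3 where "X0 = Mk a1 a2 a3 0 0 0" unfolding L0_def by blast
      with X0(2) have Z1: "Z = C (Mk a1 a2 a3 0 0 0)" by simp
      from Y0(1) obtain b1 b2 b3 where "Y0 = Mk 0 0 0 b1 b2 b3" unfolding Q0_def by blast
      with Y0(2) have Z2: "Z = C (Mk 0 0 0 b1 b2 b3)" by simp
      have "Mk a1 a2 a3 0 0 0 = Mk 0 0 0 b1 b2 b3" using Z1 Z2 CiC by metis
      then have "a1 = 0 \<and> a2 = 0 \<and> a3 = 0" using Mk_eq by blast
      then have "Z = C 0" using Z1 Mk_zero by simp
      then show "Z \<in> {0}" using linear_0[OF linC] by simp
    qed
  qed
  have part2: "\<forall>X\<in>Lambda2 P. \<forall>Y\<in>PsiSpan P. form_inner X Y = 0"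
    using conj_inner[OF gTg] Mk_orth by (auto simp: LP QP L0_def Q0_def C_def)
  have part3: "subspace (Theta P)"
    unfolding TP by (rule linear_subspace_image[OF linC T0sub])
  have part4: "Theta P \<subseteq> (so :: (real^7^7) set)"
    unfolding TP using conj_skew[OF Mk_skew] by (auto simp: T0_def so_def C_def)
  have part5: "\<forall>X\<in>Theta P. \<forall>Y\<in>Theta P. lie_bracket X Y \<in> Theta P"
  proof -
    have CT0: "C (Mk a1 a2 a3 b1 b2 b3) \<in> C ` T0" for a1 a2 a3 b1 b2 b3
      unfolding T0_def by blast
    show ?thesis unfolding TP
    proof (intro ballI)
      fix X Y assume "X \<in> C ` T0" "Y \<in> C ` T0"
      then obtain a1 a2 a3 b1 b2 b3 c1 c2 c3 d1 d2 d3 where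
        X: "X = C (Mk a1 a2 a3 b1 b2 b3)" and Y: "Y = C (Mk c1 c2 c3 d1 d2 d3)"
        unfolding T0_def by blast
      show "lie_bracket X Y \<in> C ` T0"
        by (simp only: X Y lieC[symmetric] Mk_lie CT0)
    qed
  qed
  define f where "f = f0 \<circ> Ci"
  have linf: "linear f" unfolding f_def by (rule linear_compose[OF linCi linear_f0])
  have bij1: "bij_betw Ci (C ` T0) T0"
    by (rule bij_betw_byWitness[where f'=C]) (auto simp: CiC CCi)
  have bij2: "bij_betw f0 T0 so"
  proof (rule bij_betwI')
    fix X Y assume "X \<in> T0" "Y \<in> T0"
    then show "(f0 X = f0 Y) = (X = Y)"
      by (auto simp: T0_def f0_Mk dest: Mk4_eq)
  next
    fix X assume "X \<in> T0" then show "f0 X \<in> so"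
      by (auto simp: T0_def f0_Mk so_def Mk4_skew)
  next
    fix M assume "M \<in> (so :: (real^4^4) set)"
    then have "transpose M = - M" by (simp add: so_def)
    from Mk4_surj[OF this] obtain a1 a2 a3 b1 b2 b3 where "M = Mk4 a1 a2 a3 b1 b2 b3" by blast
    then have "M = f0 (Mk a1 a2 a3 b1 b2 b3)" by (simp add: f0_Mk)
    moreover have "Mk a1 a2 a3 b1 b2 b3 \<in> T0" unfolding T0_def by blast
    ultimately show "\<exists>X\<in>T0. M = f0 X" by blast
  qed
  have bijf: "bij_betw f (Theta P) so"
    unfolding TP f_def by (rule bij_betw_trans[OF bij1 bij2])
  have homf: "\<forall>X\<in>Theta P. \<forall>Y\<in>Theta P. f (lie_bracket X Y) = lie_bracket (f X) (f Y)"
    unfolding TP f_def by (auto simp: T0_def lieCi CiC Mk_lie f0_Mk Mk4_lie)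
  show ?thesis using part1 part2 part3 part4 part5 linf bijf homf by blast
qed


end
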